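(* Let $F$ be WORDER or WMAJORITY with weights $w_1\ge\dots\ge w_n>0$, and run SMO-GP-single on MO-$F$ starting from a non-redundant initial tree. Then at every iteration every tree in the population is non-redundant, and the population has at most $n+1$ elements.
   Context: Fix an integer $n\ge 1$ and real weights $w_1\ge w_2\ge\dots\ge w_n>0$. The terminal set is $T=\{x_1,\bar x_1,\dots,x_n,\bar x_n\}$ ($\bar x_i$ is the complement of $x_i$; $x_i$ is called positive). A syntax tree is either the empty tree or a rooted ordered binary tree whose inner nodes are all labelled by the binary function $J$ (join, exactly two ordered children) and whose leaves are labelled by elements of $T$. The complexity $C(X)$ is the number of nodes of $X$ (0 for the empty tree). The leaf list $l$ of $X$ is the sequence of leaf labels in an inorder traversal. WORDER: build a list $S$ by scanning $l$ from front to rear and appending a literal only if neither it nor its complement is already in $S$; WORDER$(X)=\sum_{i:\,x_i\in S} w_i$; the expressed variables are the $x_i\in S$. WMAJORITY: WMAJORITY$(X)=\sum w_i$ over all $i$ such that $x_i$ occurs in $l$ at least once and at least as often as $\bar x_i$; these $x_i$ are the expressed variables. A tree is non-redundant if it is empty or if, with $k$ its number of expressed variables, its complexity is $2k-1$. MO-$F(X)=(F(X),C(X))$, $F$ maximized and $C$ minimized. Mutation (one HVL-Prime application): choose uniformly at random one of three operations. Substitute: replace a uniformly random leaf by a uniformly random $u\in T$. Insert: choose a uniformly random node $v$ and uniformly random $u\in T$, replace $v$ by a $J$-node with children $u$ and $v$ in uniformly random order (inserting into the empty tree yields the single leaf $u$). Delete: choose a uniformly random leaf $v$ with parent $p$ and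 sibling $u$, replace $p$ by $u$ (deleting $p$ and $v$; deleting the only leaf of a one-leaf tree yields the empty tree). Dominance: $Y\succeq X$ iff $F(Y)\ge F(X)$ and $C(Y)\le C(X)$; $Y\succ X$ iff $Y\succeq X$ and ($F(Y)>F(X)$ or $C(Y)<C(X)$). SMO-GP-single: choose an initial tree $X$ and set $P:=\{X\}$; repeat: choose $X\in P$ uniformly at random, let $Y$ be $X$ after one HVL-Prime application; if no $Z\in P$ satisfies $Z\succ Y$, set $P:=(P\setminus\{Z\in P: Y\succeq Z\})\cup\{Y\}$. *)

theory Defs
  imports Complex_Main
begin

text \<open>Variables are indexed 1..n; Pos i is x_i, Neg i is its complement.\<close>
datatype lit = Pos nat | Neg nat

fun var :: "lit \<Rightarrow> nat" where
  "var (Pos i) = i" | "var (Neg i) = i"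

definition terminals :: "nat \<Rightarrow> lit set" where
  "terminals n = {Pos i | i. 1 \<le> i \<and> i \<le> n} \<union> {Neg i | i. 1 \<le> i \<and> i \<le> n}"

text \<open>Non-empty syntax trees; a syntax tree is an optional stree (None = empty tree).\<close>
datatype stree = Lf lit | Jn stree stree

type_synonym syntree = "stree option"

fun size_st :: "stree \<Rightarrow> nat" where
  "size_st (Lf a) = 1" | "size_st (Jn l r) = 1 + size_st l + size_st r"

definition complexity :: "syntree \<Rightarrow> nat" where
  "complexity X = (case X of None \<Rightarrow> 0 | Some t \<Rightarrow> size_st t)"

fun leaves_st :: "stree \<Rightarrow> lit list" where
  "leaves_st (Lf a) = [a]" | "leaves_st (Jn l r) = leaves_st l @ leaves_st r"

definition leaves :: "syntree \<Rightarrow> lit list" where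
  "leaves X = (case X of None \<Rightarrow> [] | Some t \<Rightarrow> leaves_st t)"

definition over_T :: "nat \<Rightarrow> syntree \<Rightarrow> bool" where
  "over_T n X \<longleftrightarrow> set (leaves X) \<subseteq> terminals n"

datatype fitness_kind = WORDER | WMAJORITY

fun worder_scan :: "lit list \<Rightarrow> lit list \<Rightarrow> lit list" where
  "worder_scan S [] = S"
| "worder_scan S (x # xs) =
     (if var x \<in> var ` set S then worder_scan S xs else worder_scan (S @ [x]) xs)"

definition expressed :: "fitness_kind \<Rightarrow> syntree \<Rightarrow> nat set" where
  "expressed k X = (case k of
      WORDER \<Rightarrow> {i. Pos i \<in> set (worder_scan [] (leaves X))}
    | WMAJORITY \<Rightarrow> {i. count_list (leaves X) (Pos i) \<ge> 1 \<and>
                       count_list (leaves X) (Pos i) \<ge> count_list (leaves X) (Neg i)})"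

definition fitness :: "fitness_kind \<Rightarrow> (nat \<Rightarrow> real) \<Rightarrow> syntree \<Rightarrow> real" where
  "fitness k w X = (\<Sum>i\<in>expressed k X. w i)"

definition non_redundant :: "fitness_kind \<Rightarrow> syntree \<Rightarrow> bool" where
  "non_redundant k X \<longleftrightarrow>
     X = None \<or> int (complexity X) = 2 * int (card (expressed k X)) - 1"

fun substs :: "lit \<Rightarrow> stree \<Rightarrow> stree set" where
  "substs u (Lf a) = {Lf u}"
| "substs u (Jn l r) = {Jn l' r | l'. l' \<in> substs u l} \<union> {Jn l r' | r'. r' \<in> substs u r}"

fun inserts :: "lit \<Rightarrow> stree \<Rightarrow> stree set" where
  "inserts u (Lf a) = {Jn (Lf u) (Lf a), Jn (Lf a) (Lf u)}"
| "inserts u (Jn l r) = {Jn (Lf u) (Jn l r), Jn (Jn l r) (Lf u)}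
     \<union> {Jn l' r | l'. l' \<in> inserts u l} \<union> {Jn l r' | r'. r' \<in> inserts u r}"

fun deletes :: "stree \<Rightarrow> stree set" where
  "deletes (Lf a) = {}"
| "deletes (Jn l r) = (case l of Lf _ \<Rightarrow> {r} | _ \<Rightarrow> {}) \<union> (case r of Lf _ \<Rightarrow> {l} | _ \<Rightarrow> {})
     \<union> {Jn l' r | l'. l' \<in> deletes l} \<union> {Jn l r' | r'. r' \<in> deletes r}"

text \<open>All possible results of one HVL-Prime application. On the empty tree,
  substitution and deletion have no leaf to act on and leave the tree unchanged.\<close>
definition mutations :: "nat \<Rightarrow> syntree \<Rightarrow> syntree set" where
  "mutations n X = (case X of
      None \<Rightarrow> {Some (Lf u) | u. u \<in> terminals n} \<union> {None}
    | Some t \<Rightarrow> {Some t' | t' u. u \<in> terminals n \<and> (t' \<in> substs u t \<or> t' \<in> inserts u t)}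
               \<union> Some ` deletes t
               \<union> (case t of Lf _ \<Rightarrow> {None} | _ \<Rightarrow> {}))"

definition weakly_dom :: "fitness_kind \<Rightarrow> (nat \<Rightarrow> real) \<Rightarrow> syntree \<Rightarrow> syntree \<Rightarrow> bool" where
  "weakly_dom k w Y X \<longleftrightarrow> fitness k w Y \<ge> fitness k w X \<and> complexity Y \<le> complexity X"

definition strictly_dom :: "fitness_kind \<Rightarrow> (nat \<Rightarrow> real) \<Rightarrow> syntree \<Rightarrow> syntree \<Rightarrow> bool" where
  "strictly_dom k w Y X \<longleftrightarrow> weakly_dom k w Y X \<and>
     (fitness k w Y > fitness k w X \<or> complexity Y < complexity X)"

definition smo_step :: "fitness_kind \<Rightarrow> nat \<Rightarrow> (nat \<Rightarrow> real) \<Rightarrow> syntree set \<Rightarrow> syntree set \<Rightarrow> bool" where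
  "smo_step k n w P P' \<longleftrightarrow> (\<exists>X\<in>P. \<exists>Y\<in>mutations n X.
      P' = (if \<exists>Z\<in>P. strictly_dom k w Z Y then P
            else (P - {Z\<in>P. weakly_dom k w Y Z}) \<union> {Y}))"

text \<open>Populations reachable (with positive probability) by SMO-GP-single from X0.\<close>
inductive smo_reachable :: "fitness_kind \<Rightarrow> nat \<Rightarrow> (nat \<Rightarrow> real) \<Rightarrow> syntree \<Rightarrow> syntree set \<Rightarrow> bool"
  for k n w X0 where
  init: "smo_reachable k n w X0 {X0}"
| step: "smo_reachable k n w X0 P \<Longrightarrow> smo_step k n w P P' \<Longrightarrow> smo_reachable k n w X0 P'"

end

theory Submission
  imports Defs
begin

lemma leaves_ne: "leaves_st t \<noteq> []" by (induct t) auto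
lemma size_len: "size_st t + 1 = 2 * length (leaves_st t)" by (induct t) auto

lemma substs_leaves: "t' \<in> substs u t \<Longrightarrow> \<exists>xs a ys. leaves_st t = xs@a#ys \<and> leaves_st t' = xs@u#ys"
proof (induct t arbitrary: t')
  case (Lf b) then show ?case by (intro exI[of _ "[]"] exI[of _ b]) auto
next
  case (Jn l r)
  from Jn.prems have "(\<exists>l'. t' = Jn l' r \<and> l' \<in> substs u l) \<or> (\<exists>r'. t' = Jn l r' \<and> r' \<in> substs u r)" by auto
  then show ?case
  proof
    assume "\<exists>l'. t' = Jn l' r \<and> l' \<in> substs u l"
    then obtain l' where h: "t' = Jn l' r" "l' \<in> substs u l" by blast
    from Jn.hyps(1)[OF h(2)] obtain xs a ys where "leaves_st l = xs@a#ys \<and> leaves_st l' = xs@u#ys" by blast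
    then show ?thesis using h by (intro exI[of _ xs] exI[of _ a] exI[of _ "ys @ leaves_st r"]) auto
  next
    assume "\<exists>r'. t' = Jn l r' \<and> r' \<in> substs u r"
    then obtain r' where h: "t' = Jn l r'" "r' \<in> substs u r" by blast
    from Jn.hyps(2)[OF h(2)] obtain xs a ys where "leaves_st r = xs@a#ys \<and> leaves_st r' = xs@u#ys" by blast
    then show ?thesis using h by (intro exI[of _ "leaves_st l @ xs"] exI[of _ a] exI[of _ ys]) auto
  qed
qed

lemma inserts_leaves: "t' \<in> inserts u t \<Longrightarrow> \<exists>xs ys. leaves_st t = xs@ys \<and> leaves_st t' = xs@u#ys"
proof (induct t arbitrary: t')
  case (Lf b) then show ?case
    by (auto intro: exI[of _ "[]"] exI[of _ "[b]"])
next
  case (Jn l r)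
  from Jn.prems have "t' = Jn (Lf u) (Jn l r) \<or> t' = Jn (Jn l r) (Lf u) \<or>
     (\<exists>l'. t' = Jn l' r \<and> l' \<in> inserts u l) \<or> (\<exists>r'. t' = Jn l r' \<and> r' \<in> inserts u r)" by auto
  moreover
  { assume "t' = Jn (Lf u) (Jn l r)"
    then have ?case by (intro exI[of _ "[]"] exI[of _ "leaves_st (Jn l r)"]) auto }
  moreover
  { assume "t' = Jn (Jn l r) (Lf u)"
    then have ?case by (intro exI[of _ "leaves_st (Jn l r)"] exI[of _ "[]"]) auto }
  moreover
  { assume "\<exists>l'. t' = Jn l' r \<and> l' \<in> inserts u l"
    then obtain l' where h: "t' = Jn l' r" "l' \<in> inserts u l" by blast
    from Jn.hyps(1)[OF h(2)] obtain xs ys where "leaves_st l = xs@ys \<and> leaves_st l' = xs@u#ys" by blast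
    then have ?case using h by (intro exI[of _ xs] exI[of _ "ys @ leaves_st r"]) auto }
  moreover
  { assume "\<exists>r'. t' = Jn l r' \<and> r' \<in> inserts u r"
    then obtain r' where h: "t' = Jn l r'" "r' \<in> inserts u r" by blast
    from Jn.hyps(2)[OF h(2)] obtain xs ys where "leaves_st r = xs@ys \<and> leaves_st r' = xs@u#ys" by blast
    then have ?case using h by (intro exI[of _ "leaves_st l @ xs"] exI[of _ ys]) auto }
  ultimately show ?case by blast
qed

lemma deletes_leaves: "t' \<in> deletes t \<Longrightarrow> \<exists>xs a ys. leaves_st t = xs@a#ys \<and> leaves_st t' = xs@ys"
proof (induct t arbitrary: t')
  case (Lf b) then show ?case by simp
next
  case (Jn l r)
  from Jn.prems have "(\<exists>a. l = Lf a \<and> t' = r) \<or> (\<exists>a. r = Lf a \<and> t' = l) \<or>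
     (\<exists>l'. t' = Jn l' r \<and> l' \<in> deletes l) \<or> (\<exists>r'. t' = Jn l r' \<and> r' \<in> deletes r)"
  proof -
    have m: "t' \<in> (case l of Lf _ \<Rightarrow> {r} | _ \<Rightarrow> {}) \<or> t' \<in> (case r of Lf _ \<Rightarrow> {l} | _ \<Rightarrow> {}) \<or>
      t' \<in> {Jn l' r | l'. l' \<in> deletes l} \<or> t' \<in> {Jn l r' | r'. r' \<in> deletes r}"
      using Jn.prems unfolding deletes.simps Un_iff by blast
    have c1: "t' \<in> (case l of Lf _ \<Rightarrow> {r} | _ \<Rightarrow> {}) \<Longrightarrow> \<exists>a. l = Lf a \<and> t' = r" by (cases l) auto
    have c2: "t' \<in> (case r of Lf _ \<Rightarrow> {l} | _ \<Rightarrow> {}) \<Longrightarrow> \<exists>a. r = Lf a \<and> t' = l" by (cases r) auto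
    show ?thesis using m c1 c2 by blast
  qed
  moreover
  { assume "\<exists>a. l = Lf a \<and> t' = r"
    then obtain a where "l = Lf a" "t' = r" by blast
    then have ?case by (intro exI[of _ "[]"] exI[of _ a] exI[of _ "leaves_st r"]) auto }
  moreover
  { assume "\<exists>a. r = Lf a \<and> t' = l"
    then obtain a where "r = Lf a" "t' = l" by blast
    then have ?case by (intro exI[of _ "leaves_st l"] exI[of _ a] exI[of _ "[]"]) auto }
  moreover
  { assume "\<exists>l'. t' = Jn l' r \<and> l' \<in> deletes l"
    then obtain l' where h: "t' = Jn l' r" "l' \<in> deletes l" by blast
    from Jn.hyps(1)[OF h(2)] obtain xs a ys where "leaves_st l = xs@a#ys \<and> leaves_st l' = xs@ys" by blast
    then have ?case using h by (intro exI[of _ xs] exI[of _ a] exI[of _ "ys @ leaves_st r"]) auto }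
  moreover
  { assume "\<exists>r'. t' = Jn l r' \<and> r' \<in> deletes r"
    then obtain r' where h: "t' = Jn l r'" "r' \<in> deletes r" by blast
    from Jn.hyps(2)[OF h(2)] obtain xs a ys where "leaves_st r = xs@a#ys \<and> leaves_st r' = xs@ys" by blast
    then have ?case using h by (intro exI[of _ "leaves_st l @ xs"] exI[of _ a] exI[of _ ys]) auto }
  ultimately show ?case by blast
qed

definition posset :: "lit list \<Rightarrow> nat set" where "posset l = {j. Pos j \<in> set l}"

lemma posset_finite: "finite (posset l)"
proof -
  have "posset l \<subseteq> var ` set l" unfolding posset_def by (force)
  then show ?thesis by (rule finite_subset) simp
qed

lemma posset_map: "posset (map Pos js) = set js" unfolding posset_def by auto

lemma posset_card: "card (posset l) \<le> length l \<and> (card (posset l) = length l \<longrightarrow> (\<exists>js. l = map Pos js \<and> distinct js))"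
proof (induct l)
  case Nil then show ?case by (simp add: posset_def)
next
  case (Cons a l)
  show ?case
  proof (cases a)
    case (Neg j)
    then have "posset (a#l) = posset l" unfolding posset_def by auto
    then show ?thesis using Cons by auto
  next
    case (Pos j)
    then have e: "posset (a#l) = insert j (posset l)" unfolding posset_def by auto
    have c: "card (insert j (posset l)) \<le> Suc (card (posset l))" by (rule card_insert_le_m1) auto
    show ?thesis
    proof (intro conjI impI)
      show "card (posset (a#l)) \<le> length (a#l)" using e c Cons by simp
      assume h: "card (posset (a#l)) = length (a#l)"
      have nj: "j \<notin> posset l"
      proof
        assume "j \<in> posset l" then have "insert j (posset l) = posset l" by auto
        then show False using h e Cons by simp
      qed
      then have "card (posset (a#l)) = Suc (card (posset l))" using e posset_finite by simp
      then have "card (posset l) = length l" using h by simp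
      then obtain js where "l = map Pos js" "distinct js" using Cons by blast
      then show "\<exists>js. a # l = map Pos js \<and> distinct js" using Pos nj posset_map
        by (intro exI[of _ "j#js"]) auto
    qed
  qed
qed

lemma scan_set: "set (worder_scan S l) \<subseteq> set S \<union> set l"
  by (induct S l rule: worder_scan.induct) auto

lemma scan_pos: "distinct js \<Longrightarrow> set js \<inter> var ` set S = {} \<Longrightarrow> worder_scan S (map Pos js) = S @ map Pos js"
proof (induct "js" arbitrary: S)
  case Nil then show ?case by simp
next
  case (Cons a js)
  have "worder_scan (S @ [Pos a]) (map Pos js) = (S @ [Pos a]) @ map Pos js"
    using Cons by (intro Cons.hyps) auto
  moreover have "a \<notin> var ` set S" using Cons.prems by auto
  ultimately show ?case by simp
qed

lemma count_pos: "distinct js \<Longrightarrow> count_list (map Pos js) (Pos i) = (if i \<in> set js then 1 else 0)"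
  by (induct "js") auto

lemma count_neg: "count_list (map Pos js) (Neg i) = 0"
  by (induct "js") auto

lemma count_ge1: "Suc 0 \<le> count_list l x \<Longrightarrow> x \<in> set l"
  using count_list_0_iff[of l x] by auto

lemma expr_sub: "expressed k X \<subseteq> posset (leaves X)"
proof (cases k)
  case WORDER
  then show ?thesis using scan_set[of "[]" "leaves X"] unfolding expressed_def posset_def by auto
next
  case WMAJORITY
  then show ?thesis unfolding expressed_def posset_def
    by (auto intro: count_ge1)
qed

lemma expr_finite: "finite (expressed k X)"
  using expr_sub posset_finite finite_subset by blast

lemma expr_pos: "leaves X = map Pos js \<Longrightarrow> distinct js \<Longrightarrow> expressed k X = set js"
proof (cases k)
  case WORDER
  assume "leaves X = map Pos js" "distinct js"
  then show ?thesis using WORDER scan_pos[of "js" "[]"] unfolding expressed_def by auto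
next
  case WMAJORITY
  assume "leaves X = map Pos js" "distinct js"
  then show ?thesis using WMAJORITY unfolding expressed_def by (auto simp: count_pos count_neg)
qed

lemma nonred_Some: "non_redundant k (Some t) \<longleftrightarrow> card (expressed k (Some t)) = length (leaves_st t)"
  using size_len[of t] unfolding non_redundant_def complexity_def by auto

lemma nonred_Some_pos: "non_redundant k (Some t) \<Longrightarrow> \<exists>js. leaves_st t = map Pos js \<and> distinct js"
proof -
  assume "non_redundant k (Some t)"
  then have "card (expressed k (Some t)) = length (leaves_st t)" by (simp add: nonred_Some)
  moreover have "card (expressed k (Some t)) \<le> card (posset (leaves_st t))"
    using expr_sub[of k "Some t"] posset_finite by (simp add: leaves_def card_mono)
  ultimately show ?thesis using posset_card[of "leaves_st t"] by auto
qed

lemma pos_nonred: "leaves_st t = map Pos js \<Longrightarrow> distinct js \<Longrightarrow> non_redundant k (Some t)"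
  using expr_pos[of "Some t" "js" k] by (simp add: nonred_Some leaves_def distinct_card)


lemma term_bound: "Pos i \<in> terminals n \<Longrightarrow> 1 \<le> i \<and> i \<le> n" by (auto simp: terminals_def)

lemma map_split1: "map Pos js = xs @ a # ys \<Longrightarrow> \<exists>js1 i js2. js = js1 @ i # js2 \<and> xs = map Pos js1 \<and> a = Pos i \<and> ys = map Pos js2"
  by (auto simp: map_eq_append_conv Cons_eq_map_conv)

lemma map_split2: "map Pos js = xs @ ys \<Longrightarrow> \<exists>js1 js2. js = js1 @ js2 \<and> xs = map Pos js1 \<and> ys = map Pos js2"
  by (auto simp: map_eq_append_conv)

lemma le_fit: "finite A \<Longrightarrow> \<forall>j\<in>A. w j > (0::real) \<Longrightarrow> E \<subseteq> A \<Longrightarrow> sum w E \<le> sum w A"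
  by (rule sum_mono2) auto

lemma strict_fit: "finite A \<Longrightarrow> i \<in> A \<Longrightarrow> \<forall>j\<in>A. w j > (0::real) \<Longrightarrow> E \<subseteq> A - {i} \<Longrightarrow> sum w E < sum w A"
proof -
  assume a: "finite A" "i \<in> A" "\<forall>j\<in>A. w j > (0::real)" "E \<subseteq> A - {i}"
  have "sum w E \<le> sum w (A - {i})" using a by (intro le_fit) auto
  moreover have "sum w A = w i + sum w (A - {i})" using a by (simp add: sum.remove)
  ultimately show ?thesis using a by auto
qed

lemma posset_app: "posset (xs @ u # ys) = posset xs \<union> posset [u] \<union> posset ys"
  unfolding posset_def by auto

lemma posset_Neg: "posset [Neg j] = {}" unfolding posset_def by auto
lemma posset_Pos: "posset [Pos j] = {j}" unfolding posset_def by auto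

lemma mut:
  assumes wpos: "\<forall>i. 1 \<le> i \<and> i \<le> n \<longrightarrow> w i > 0" and ov: "over_T n X"
    and nr: "non_redundant k X" and Y: "Y \<in> mutations n X"
  shows "over_T n Y \<and> (non_redundant k Y \<or> strictly_dom k w X Y)"
proof (cases X)
  case None
  then have "Y = None \<or> (\<exists>u. u \<in> terminals n \<and> Y = Some (Lf u))" using Y unfolding mutations_def by auto
  then show ?thesis
  proof
    assume "Y = None" then show ?thesis by (simp add: over_T_def leaves_def non_redundant_def)
  next
    assume "\<exists>u. u \<in> terminals n \<and> Y = Some (Lf u)"
    then obtain u where u: "u \<in> terminals n" "Y = Some (Lf u)" by blast
    have o: "over_T n Y" using u by (simp add: over_T_def leaves_def)
    show ?thesis
    proof (cases u)
      case (Pos i)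
      then have "non_redundant k Y" using u pos_nonred[of "Lf u" "[i]" k] by simp
      then show ?thesis using o by blast
    next
      case (Neg i)
      have "expressed k Y = {}" using expr_sub[of k Y] u Neg posset_Neg by (simp add: leaves_def)
      moreover have "expressed k X = {}" using expr_sub[of k X] None by (simp add: leaves_def posset_def)
      ultimately have "strictly_dom k w X Y"
        using None u unfolding strictly_dom_def weakly_dom_def fitness_def complexity_def by simp
      then show ?thesis using o by blast
    qed
  qed
next
  case (Some t)
  obtain js where js: "leaves_st t = map Pos js" "distinct js" using nr Some nonred_Some_pos by blast
  have T: "set (leaves_st t) \<subseteq> terminals n" using ov Some by (simp add: over_T_def leaves_def)
  have wjs: "\<forall>j\<in>set js. w j > 0"
  proof
    fix j assume "j \<in> set js"
    then have "Pos j \<in> set (leaves_st t)" using js by simp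
    then have "Pos j \<in> terminals n" using T by blast
    then show "w j > 0" using term_bound[of j n] wpos by blast
  qed
  have EX: "expressed k X = set js" using expr_pos[of X js k] js Some by (simp add: leaves_def)
  have FX: "fitness k w X = sum w (set js)" using EX by (simp add: fitness_def)
  have CX: "complexity X + 1 = 2 * length js" using size_len[of t] js Some by (simp add: complexity_def)
  from Y Some have cases: "(\<exists>t' u. Y = Some t' \<and> u \<in> terminals n \<and> t' \<in> substs u t) \<or>
      (\<exists>t' u. Y = Some t' \<and> u \<in> terminals n \<and> t' \<in> inserts u t) \<or>
      (\<exists>t'. Y = Some t' \<and> t' \<in> deletes t) \<or> Y = None"
  proof -
    have m: "Y \<in> {Some t' | t' u. u \<in> terminals n \<and> (t' \<in> substs u t \<or> t' \<in> inserts u t)}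
       \<union> Some ` deletes t \<union> (case t of Lf _ \<Rightarrow> {None} | _ \<Rightarrow> {})"
      using Y Some by (simp add: mutations_def)
    have c: "(case t of Lf _ \<Rightarrow> {None} | _ \<Rightarrow> {}) \<subseteq> {None}" by (cases t) auto
    show ?thesis
    proof (cases "Y \<in> Some ` deletes t")
      case True then show ?thesis by blast
    next
      case False
      show ?thesis
      proof (cases "Y = None")
        case True then show ?thesis by blast
      next
        case F2: False
        then have "Y \<in> {Some t' | t' u. u \<in> terminals n \<and> (t' \<in> substs u t \<or> t' \<in> inserts u t)}"
          using m c False by blast
        then obtain t' u where "Y = Some t'" "u \<in> terminals n" "t' \<in> substs u t \<or> t' \<in> inserts u t"
          by blast
        then show ?thesis by blast
      qed
    qed
  qed
  moreover
  { assume "\<exists>t' u. Y = Some t' \<and> u \<in> terminals n \<and> t' \<in> substs u t"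
    then obtain t' u where h: "Y = Some t'" "u \<in> terminals n" "t' \<in> substs u t" by blast
    obtain xs a ys where l: "leaves_st t = xs@a#ys" "leaves_st t' = xs@u#ys" using substs_leaves[OF h(3)] by blast
    obtain js1 i js2 where s: "js = js1 @ i # js2" "xs = map Pos js1" "a = Pos i" "ys = map Pos js2"
      using map_split1[of js xs a ys] l js by auto
    have o: "over_T n Y" using h l T by (auto simp: over_T_def leaves_def)
    have CY: "complexity Y + 1 = 2 * length js" using size_len[of t'] l s h by (simp add: complexity_def)
    have ?thesis
    proof (cases "non_redundant k Y")
      case True then show ?thesis using o by blast
    next
      case False
      have sub: "posset (leaves_st t') \<subseteq> set js - {i}"
      proof (cases u)
        case (Pos j)
        have "\<not> distinct (js1 @ j # js2)"
        proof
          assume "distinct (js1 @ j # js2)"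
          then have "non_redundant k Y" using pos_nonred[of t' "js1 @ j # js2" k] l s Pos h by simp
          then show False using False by simp
        qed
        then have "j \<in> set js1 \<union> set js2" using js(2) s(1) by auto
        then show ?thesis using l s Pos js(2) by (auto simp: posset_app posset_Pos posset_map)
      next
        case (Neg j)
        then show ?thesis using l s js(2) by (auto simp: posset_app posset_Neg posset_map)
      qed
      have "expressed k Y \<subseteq> set js - {i}" using expr_sub[of k Y] sub h by (simp add: leaves_def)
      then have "sum w (expressed k Y) < sum w (set js)"
        using strict_fit[of "set js" i w "expressed k Y"] wjs s by auto
      then have "fitness k w Y < fitness k w X" by (simp add: fitness_def EX)
      then have "strictly_dom k w X Y" using CX CY unfolding strictly_dom_def weakly_dom_def by simp
      then show ?thesis using o by blast
    qed }
  moreover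
  { assume "\<exists>t' u. Y = Some t' \<and> u \<in> terminals n \<and> t' \<in> inserts u t"
    then obtain t' u where h: "Y = Some t'" "u \<in> terminals n" "t' \<in> inserts u t" by blast
    obtain xs ys where l: "leaves_st t = xs@ys" "leaves_st t' = xs@u#ys" using inserts_leaves[OF h(3)] by blast
    obtain js1 js2 where s: "js = js1 @ js2" "xs = map Pos js1" "ys = map Pos js2"
      using map_split2[of js xs ys] l js by auto
    have o: "over_T n Y" using h l T by (auto simp: over_T_def leaves_def)
    have CY: "complexity Y + 1 = 2 * (length js + 1)" using size_len[of t'] l s h by (simp add: complexity_def)
    have ?thesis
    proof (cases "non_redundant k Y")
      case True then show ?thesis using o by blast
    next
      case False
      have sub: "posset (leaves_st t') \<subseteq> set js"
      proof (cases u)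
        case (Pos j)
        have "\<not> distinct (js1 @ j # js2)"
        proof
          assume "distinct (js1 @ j # js2)"
          then have "non_redundant k Y" using pos_nonred[of t' "js1 @ j # js2" k] l s Pos h by simp
          then show False using False by simp
        qed
        then have "j \<in> set js1 \<union> set js2" using js(2) s(1) by auto
        then show ?thesis using l s Pos js(2) by (auto simp: posset_app posset_Pos posset_map)
      next
        case (Neg j)
        then show ?thesis using l s js(2) by (auto simp: posset_app posset_Neg posset_map)
      qed
      have "expressed k Y \<subseteq> set js" using expr_sub[of k Y] sub h by (simp add: leaves_def)
      then have "sum w (expressed k Y) \<le> sum w (set js)"
        using le_fit[of "set js" w "expressed k Y"] wjs by auto
      then have "fitness k w Y \<le> fitness k w X" by (simp add: fitness_def EX)
      then have "strictly_dom k w X Y" using CX CY unfolding strictly_dom_def weakly_dom_def by simp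
      then show ?thesis using o by blast
    qed }
  moreover
  { assume "\<exists>t'. Y = Some t' \<and> t' \<in> deletes t"
    then obtain t' where h: "Y = Some t'" "t' \<in> deletes t" by blast
    obtain xs a ys where l: "leaves_st t = xs@a#ys" "leaves_st t' = xs@ys" using deletes_leaves[OF h(2)] by blast
    obtain js1 i js2 where s: "js = js1 @ i # js2" "xs = map Pos js1" "a = Pos i" "ys = map Pos js2"
      using map_split1[of js xs a ys] l js by auto
    have o: "over_T n Y" using h l T by (auto simp: over_T_def leaves_def)
    have "non_redundant k Y" using pos_nonred[of t' "js1 @ js2" k] l s h js(2) by simp
    then have ?thesis using o by blast }
  moreover
  { assume "Y = None" then have ?thesis by (simp add: over_T_def leaves_def non_redundant_def) }
  ultimately show ?thesis by blast
qed


definition Inv :: "fitness_kind \<Rightarrow> nat \<Rightarrow> syntree set \<Rightarrow> bool" where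
  "Inv k n P \<longleftrightarrow> finite P \<and> (\<forall>X\<in>P. over_T n X \<and> non_redundant k X)
     \<and> (\<forall>X\<in>P. \<forall>Y\<in>P. complexity X = complexity Y \<longrightarrow> X = Y)"

lemma inv_step:
  assumes wpos: "\<forall>i. 1 \<le> i \<and> i \<le> n \<longrightarrow> w i > 0" and I: "Inv k n P" and st: "smo_step k n w P P'"
  shows "Inv k n P'"
proof -
  obtain X Y where X: "X \<in> P" and Y: "Y \<in> mutations n X" and
    P': "P' = (if \<exists>Z\<in>P. strictly_dom k w Z Y then P else (P - {Z\<in>P. weakly_dom k w Y Z}) \<union> {Y})"
    using st unfolding smo_step_def by blast
  show ?thesis
  proof (cases "\<exists>Z\<in>P. strictly_dom k w Z Y")
    case True then show ?thesis using P' I by simp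
  next
    case False
    then have nd: "\<not> strictly_dom k w X Y" using X by blast
    have m: "over_T n Y \<and> non_redundant k Y" using mut[OF wpos _ _ Y] X I nd unfolding Inv_def by blast
    have P'': "P' = (P - {Z\<in>P. weakly_dom k w Y Z}) \<union> {Y}" using P' False by simp
    have inj: "\<forall>Z\<in>P'. complexity Z = complexity Y \<longrightarrow> Z = Y"
    proof (intro ballI impI)
      fix Z assume Z: "Z \<in> P'" "complexity Z = complexity Y"
      show "Z = Y"
      proof (rule ccontr)
        assume "Z \<noteq> Y"
        then have "Z \<in> P" "\<not> weakly_dom k w Y Z" using Z P'' by auto
        then have "strictly_dom k w Z Y" using Z(2) unfolding weakly_dom_def strictly_dom_def by auto
        then show False using False \<open>Z \<in> P\<close> by blast
      qed
    qed
    show ?thesis using I m inj unfolding Inv_def P'' by auto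
  qed
qed

lemma inv_reach:
  assumes wpos: "\<forall>i. 1 \<le> i \<and> i \<le> n \<longrightarrow> w i > 0" and "over_T n X0" "non_redundant k X0"
    and "smo_reachable k n w X0 P"
  shows "Inv k n P"
  using assms(4)
proof induct
  case init then show ?case using assms(2,3) by (simp add: Inv_def)
next
  case (step P P') then show ?case using inv_step[OF wpos] by blast
qed

lemma compl_card: "non_redundant k X \<Longrightarrow> complexity X = (if card (expressed k X) = 0 then 0 else 2 * card (expressed k X) - 1)"
proof (cases X)
  case None
  assume "non_redundant k X"
  have "expressed k X = {}" using expr_sub[of k X] None by (simp add: leaves_def posset_def)
  then show ?thesis using None by (simp add: complexity_def)
next
  case (Some t)
  assume "non_redundant k X"
  then have "card (expressed k X) = length (leaves_st t)" using Some nonred_Some by simp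
  then show ?thesis using Some size_len[of t] leaves_ne[of t] by (simp add: complexity_def)
qed

lemma expr_bound: "over_T n X \<Longrightarrow> card (expressed k X) \<le> n"
proof -
  assume "over_T n X"
  then have "expressed k X \<subseteq> {1..n}" using expr_sub[of k X] term_bound
    unfolding over_T_def posset_def by fastforce
  then have "card (expressed k X) \<le> card {1..n}" by (intro card_mono) auto
  then show ?thesis by simp
qed

lemma inv_card: "Inv k n P \<Longrightarrow> card P \<le> n + 1"
proof -
  assume I: "Inv k n P"
  let ?f = "\<lambda>X. card (expressed k X)"
  have "inj_on ?f P"
  proof (rule inj_onI)
    fix X Y assume "X \<in> P" "Y \<in> P" "?f X = ?f Y"
    then have "complexity X = complexity Y" using I compl_card[of k X] compl_card[of k Y]
      unfolding Inv_def by simp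
    then show "X = Y" using I \<open>X \<in> P\<close> \<open>Y \<in> P\<close> unfolding Inv_def by blast
  qed
  moreover have "?f ` P \<subseteq> {0..n}" using I expr_bound unfolding Inv_def by fastforce
  ultimately have "card P \<le> card {0..n}" by (intro card_inj_on_le) auto
  then show ?thesis by simp
qed

theorem mainTheorem10:
  fixes k :: fitness_kind and n :: nat and w :: "nat \<Rightarrow> real" and X0 :: syntree
    and P :: "syntree set"
  assumes "n \<ge> 1"
    and "\<forall>i j. 1 \<le> i \<and> i \<le> j \<and> j \<le> n \<longrightarrow> w j \<le> w i"
    and "\<forall>i. 1 \<le> i \<and> i \<le> n \<longrightarrow> w i > 0"
    and "over_T n X0"
    and "non_redundant k X0"
    and "smo_reachable k n w X0 P"
  shows "(\<forall>X\<in>P. non_redundant k X) \<and> finite P \<and> card P \<le> n + 1"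
proof -
  have I: "Inv k n P" using inv_reach[OF assms(3) assms(4) assms(5) assms(6)] .
  then show ?thesis using inv_card[OF I] unfolding Inv_def by blast
qed

end
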